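(* For all $\boldsymbol\upsilon,\boldsymbol\xi\in P_{II}$: $\boldsymbol\upsilon\subseteq\boldsymbol\xi$ if and only if $\mathcal D_{\boldsymbol\upsilon\text{-unc}}\subseteq\mathcal D_{\boldsymbol\xi\text{-unc}}$.
   Context: Let $n\ge1$, $L=\{1,\dots,n\}$, and for $i\in L$ let $\mathcal H_i$ be a Hilbert space with $1<\dim\mathcal H_i<\infty$; $\mathcal H_X=\bigotimes_{i\in X}\mathcal H_i$ and $\mathcal D_X$ is the set of density operators on $\mathcal H_X$. $P_I$ is the set of partitions of $L$ ordered by refinement. For $\xi\in P_I$, $\mathcal D_{\xi\text{-unc}}=\{\varrho\in\mathcal D_L:\varrho=\bigotimes_{X\in\xi}\varrho_X,\ \varrho_X\in\mathcal D_X\}$. $P_{II}$ is the set of nonempty down-sets of $(P_I,\preceq)$ (nonempty sets of partitions closed under taking finer partitions), and for $\boldsymbol\xi\in P_{II}$, $\mathcal D_{\boldsymbol\xi\text{-unc}}=\bigcup_{\xi\in\boldsymbol\xi}\mathcal D_{\xi\text{-unc}}$. *)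

theory Defs
  imports Complex_Main "HOL-Library.Disjoint_Sets"
begin

text \<open>Concrete model: subsystem i (i in L = {1..n}) is the Hilbert space C^(d i).
  H_X = tensor product over i in X is modelled with the orthonormal product basis
  indexed by the configurations below (functions X -> nat with a i < d i, extended by 0).
  Operators on H_X are matrices indexed by configurations; entries outside are 0.\<close>

definition configs :: "(nat \<Rightarrow> nat) \<Rightarrow> nat set \<Rightarrow> (nat \<Rightarrow> nat) set" where
  "configs d X = {a. (\<forall>i\<in>X. a i < d i) \<and> (\<forall>i. i \<notin> X \<longrightarrow> a i = 0)}"

definition restr :: "nat set \<Rightarrow> (nat \<Rightarrow> nat) \<Rightarrow> (nat \<Rightarrow> nat)" where
  "restr X a = (\<lambda>i. if i \<in> X then a i else 0)"

definition density_ops :: "(nat \<Rightarrow> nat) \<Rightarrow> nat set \<Rightarrow> ((nat \<Rightarrow> nat) \<Rightarrow> (nat \<Rightarrow> nat) \<Rightarrow> complex) set" where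
  "density_ops d X = {M.
     (\<forall>a b. (a \<notin> configs d X \<or> b \<notin> configs d X) \<longrightarrow> M a b = 0) \<and>
     (\<forall>v :: (nat \<Rightarrow> nat) \<Rightarrow> complex.
        let q = (\<Sum>a\<in>configs d X. \<Sum>b\<in>configs d X. cnj (v a) * M a b * v b)
        in Im q = 0 \<and> Re q \<ge> 0) \<and>
     (\<Sum>a\<in>configs d X. M a a) = 1}"

definition tensor :: "(nat \<Rightarrow> nat) \<Rightarrow> nat set \<Rightarrow> nat set set
     \<Rightarrow> (nat set \<Rightarrow> (nat \<Rightarrow> nat) \<Rightarrow> (nat \<Rightarrow> nat) \<Rightarrow> complex)
     \<Rightarrow> ((nat \<Rightarrow> nat) \<Rightarrow> (nat \<Rightarrow> nat) \<Rightarrow> complex)" where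
  "tensor d L xi rho = (\<lambda>a b. if a \<in> configs d L \<and> b \<in> configs d L
       then (\<Prod>X\<in>xi. rho X (restr X a) (restr X b)) else 0)"

definition PI :: "nat \<Rightarrow> nat set set set" where
  "PI n = {xi. partition_on {1..n} xi}"

definition finer :: "nat set set \<Rightarrow> nat set set \<Rightarrow> bool" where
  "finer xi ups \<longleftrightarrow> (\<forall>X\<in>xi. \<exists>Y\<in>ups. X \<subseteq> Y)"

definition PII :: "nat \<Rightarrow> nat set set set set" where
  "PII n = {Xi. Xi \<noteq> {} \<and> Xi \<subseteq> PI n \<and>
      (\<forall>ups\<in>Xi. \<forall>xi\<in>PI n. finer xi ups \<longrightarrow> xi \<in> Xi)}"

definition unc :: "(nat \<Rightarrow> nat) \<Rightarrow> nat \<Rightarrow> nat set set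
     \<Rightarrow> ((nat \<Rightarrow> nat) \<Rightarrow> (nat \<Rightarrow> nat) \<Rightarrow> complex) set" where
  "unc d n xi = {rho. \<exists>rs. (\<forall>X\<in>xi. rs X \<in> density_ops d X) \<and> rho = tensor d {1..n} xi rs}"

definition unc2 :: "(nat \<Rightarrow> nat) \<Rightarrow> nat \<Rightarrow> nat set set set
     \<Rightarrow> ((nat \<Rightarrow> nat) \<Rightarrow> (nat \<Rightarrow> nat) \<Rightarrow> complex) set" where
  "unc2 d n Xi = (\<Union>xi\<in>Xi. unc d n xi)"

end

theory Submission
  imports Defs
begin

definition mm :: "(nat \<Rightarrow> nat) \<Rightarrow> nat set \<Rightarrow> (nat \<Rightarrow> nat) \<Rightarrow> real" where
  "mm d X a = (if a \<in> configs d X \<inter> {(\<lambda>_. 0), restr X (\<lambda>_. 1)} then 1/2 else 0)"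

definition RR :: "(nat \<Rightarrow> nat) \<Rightarrow> nat set \<Rightarrow> (nat \<Rightarrow> nat) \<Rightarrow> (nat \<Rightarrow> nat) \<Rightarrow> complex" where
  "RR d X a b = (if a = b then complex_of_real (mm d X a) else 0)"

lemma configs_finite:
  assumes "finite X" shows "finite (configs d X)"
proof -
  have "inj_on (\<lambda>a. restrict a X) (configs d X)"
    unfolding inj_on_def configs_def restrict_def
    by (auto simp: fun_eq_iff) (metis)
  moreover have "(\<lambda>a. restrict a X) ` configs d X \<subseteq> PiE X (\<lambda>i. {..<d i})"
    by (auto simp: configs_def PiE_def extensional_def)
  moreover have "finite (PiE X (\<lambda>i. {..<d i}))" using assms by (simp add: finite_PiE)
  ultimately show ?thesis by (meson finite_imageD finite_subset)
qed

lemma RR_density: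
  assumes "finite X" "X \<noteq> {}" "\<forall>i\<in>X. d i > 1"
  shows "RR d X \<in> density_ops d X"
proof -
  let ?C = "configs d X"
  have fin: "finite ?C" using configs_finite assms(1) .
  have z: "(\<lambda>_. 0) \<in> ?C" using assms(3) by (auto simp: configs_def)
  have o: "restr X (\<lambda>_. 1) \<in> ?C" using assms(3) by (auto simp: configs_def restr_def)
  have zo: "(\<lambda>_. 0::nat) \<noteq> restr X (\<lambda>_. 1)" using assms(2)
    by (auto simp: restr_def fun_eq_iff)
  have A: "\<forall>a b. (a \<notin> ?C \<or> b \<notin> ?C) \<longrightarrow> RR d X a b = 0"
    by (auto simp: RR_def mm_def)
  have B: "Im q = 0 \<and> Re q \<ge> 0"
    if q: "q = (\<Sum>a\<in>?C. \<Sum>b\<in>?C. cnj (v a) * RR d X a b * v b)" for v q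
  proof -
    have "q = (\<Sum>a\<in>?C. cnj (v a) * complex_of_real (mm d X a) * v a)"
      unfolding q RR_def
    proof (rule sum.cong[OF refl])
      fix a assume a: "a \<in> ?C"
      have "(\<Sum>b\<in>?C. cnj (v a) * (if a = b then complex_of_real (mm d X a) else 0) * v b)
          = (\<Sum>b\<in>?C. if b = a then cnj (v a) * complex_of_real (mm d X a) * v a else 0)"
        by (rule sum.cong) auto
      also have "\<dots> = cnj (v a) * complex_of_real (mm d X a) * v a" using a fin by simp
      finally show "(\<Sum>b\<in>?C. cnj (v a) * (if a = b then complex_of_real (mm d X a) else 0) * v b)
          = cnj (v a) * complex_of_real (mm d X a) * v a" .
    qed
    also have "\<dots> = complex_of_real (\<Sum>a\<in>?C. mm d X a * (cmod (v a))^2)"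
    proof -
      have h: "cnj (v a) * complex_of_real (mm d X a) * v a = complex_of_real (mm d X a * (cmod (v a))^2)" for a
        using complex_norm_square[of "v a"] by (simp add: mult.commute mult.left_commute)
      show ?thesis unfolding of_real_sum by (rule sum.cong[OF refl], rule h)
    qed
    finally show ?thesis
      by (simp add: mm_def sum_nonneg)
  qed
  have C: "(\<Sum>a\<in>?C. RR d X a a) = 1"
  proof -
    have "(\<Sum>a\<in>?C. RR d X a a) = complex_of_real (\<Sum>a\<in>?C. if a \<in> {(\<lambda>_. 0), restr X (\<lambda>_. 1)} then 1/2 else 0)"
      by (simp add: RR_def mm_def of_real_sum)
    also have "(\<Sum>a\<in>?C. if a \<in> {(\<lambda>_. 0), restr X (\<lambda>_. 1)} then 1/2 else 0) = (\<Sum>a\<in>?C \<inter> {(\<lambda>_. 0), restr X (\<lambda>_. 1)}. (1/2::real))"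
      by (rule sum.inter_restrict[symmetric, OF fin])
    also have "?C \<inter> {(\<lambda>_. 0), restr X (\<lambda>_. 1)} = {(\<lambda>_. 0), restr X (\<lambda>_. 1)}" using z o by auto
    finally show ?thesis using zo by simp
  qed
  show ?thesis unfolding density_ops_def using A B C by (auto simp: Let_def)
qed

lemma restr_in_configs:
  assumes "X \<subseteq> L" "\<forall>i\<in>L. d i > 1"
  shows "restr X (\<lambda>_. 1) \<in> configs d L" "(\<lambda>_. 0) \<in> configs d L"
  using assms by (auto simp: configs_def restr_def)

lemma tensor_diag:
  "x \<in> configs d L \<Longrightarrow> tensor d L P R x x = (\<Prod>Z\<in>P. R Z (restr Z x) (restr Z x))"
  by (simp add: tensor_def)

lemma key:
  assumes pxi: "partition_on {1..n} xi" and pu: "partition_on {1..n} ups"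
    and d: "\<forall>i\<in>{1..n}. d i > 1"
    and eq: "tensor d {1..n} xi (RR d) = tensor d {1..n} ups sig"
  shows "finer xi ups"
  unfolding finer_def
proof
  fix X assume X: "X \<in> xi"
  show "\<exists>Y\<in>ups. X \<subseteq> Y"
  proof (rule ccontr)
    assume nY: "\<not> (\<exists>Y\<in>ups. X \<subseteq> Y)"
    let ?L = "{1..n::nat}"
    have XL: "X \<subseteq> ?L" using pxi X by (auto simp: partition_on_def)
    have Xne: "X \<noteq> {}" using pxi X by (auto simp: partition_on_def)
    have finxi: "finite xi" using pxi
      by (metis finite_UnionD finite_atLeastAtMost partition_on_def)
    then obtain i where i: "i \<in> X" using Xne by auto
    then have "i \<in> \<Union>ups" using XL pu by (auto simp: partition_on_def)
    then obtain Y where Y: "Y \<in> ups" "i \<in> Y" by auto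
    then obtain j where j: "j \<in> X" "j \<notin> Y" using nY by auto
    define a0 :: "nat \<Rightarrow> nat" where "a0 = (\<lambda>_. 0)"
    define a1 where "a1 = restr X (\<lambda>_. 1)"
    define c where "c = restr (X \<inter> Y) (\<lambda>_. 1)"
    define e where "e = restr (X - Y) (\<lambda>_. 1)"
    have cf: "a0 \<in> configs d ?L" "a1 \<in> configs d ?L" "c \<in> configs d ?L" "e \<in> configs d ?L"
      unfolding a0_def a1_def c_def e_def using restr_in_configs[OF _ d] XL by (meson Diff_subset inf.coboundedI1 subset_trans)+
    let ?T = "tensor d ?L ups sig"
    have disj: "\<And>A B. A \<in> xi \<Longrightarrow> B \<in> xi \<Longrightarrow> A \<noteq> B \<Longrightarrow> A \<inter> B = {}"
      using pxi by (auto simp: partition_on_def dest: disjointD)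
    have disjU: "\<And>A B. A \<in> ups \<Longrightarrow> B \<in> ups \<Longrightarrow> A \<noteq> B \<Longrightarrow> A \<inter> B = {}"
      using pu by (auto simp: partition_on_def dest: disjointD)
    have subL: "\<And>A. A \<in> xi \<Longrightarrow> A \<subseteq> ?L" using pxi by (auto simp: partition_on_def)
    have xdiag: "?T x x = (\<Prod>Z\<in>xi. complex_of_real (mm d Z (restr Z x)))" if "x \<in> configs d ?L" for x
      using tensor_diag[OF that, of xi "RR d"] eq by (simp add: RR_def)
    have Tc: "?T c c = 0"
    proof -
      have "mm d X (restr X c) = 0"
      proof -
        have "restr X c i = 1" "restr X c j = 0" using i j Y by (auto simp: restr_def c_def)
        moreover have "restr X (\<lambda>_. 1) j = 1" using j by (simp add: restr_def)
        ultimately have "restr X c \<noteq> (\<lambda>_. 0)" "restr X c \<noteq> restr X (\<lambda>_. 1)" by auto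
        then show ?thesis by (auto simp: mm_def)
      qed
      then show ?thesis using xdiag[OF cf(3)] X finxi by (auto simp add: prod_zero_iff)
    qed
    have nz: "?T x x \<noteq> 0" if "x \<in> configs d ?L" "\<And>Z. Z \<in> xi \<Longrightarrow> restr Z x \<in> {(\<lambda>_. 0), restr Z (\<lambda>_. 1)}" for x
    proof -
      have "mm d Z (restr Z x) \<noteq> 0" if Z: "Z \<in> xi" for Z
      proof -
        have dZ: "\<forall>i\<in>Z. d i > 1" using subL[OF Z] d by auto
        have "restr Z x \<in> configs d Z"
          using dZ restr_in_configs[OF subset_refl dZ]             \<open>\<And>Z. Z \<in> xi \<Longrightarrow> restr Z x \<in> {(\<lambda>_. 0), restr Z (\<lambda>_. 1)}\<close>[OF Z] by auto
        then show ?thesis using \<open>\<And>Z. Z \<in> xi \<Longrightarrow> restr Z x \<in> {(\<lambda>_. 0), restr Z (\<lambda>_. 1)}\<close>[OF Z]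
          by (auto simp: mm_def)
      qed
      then show ?thesis using xdiag[OF that(1)] finxi by (simp add: prod_zero_iff)
    qed
    have T0: "?T a0 a0 \<noteq> 0" by (rule nz[OF cf(1)]) (auto simp: a0_def restr_def)
    have T1: "?T a1 a1 \<noteq> 0"
    proof (rule nz[OF cf(2)])
      fix Z assume Z: "Z \<in> xi"
      show "restr Z a1 \<in> {(\<lambda>_. 0), restr Z (\<lambda>_. 1)}"
      proof (cases "Z = X")
        case True then show ?thesis by (auto simp: a1_def restr_def)
      next
        case False then have "Z \<inter> X = {}" using disj Z X by auto
        then have "restr Z a1 = (\<lambda>_. 0)" by (auto simp: a1_def restr_def fun_eq_iff)
        then show ?thesis by simp
      qed
    qed
    have finu: "finite ups" using pu
      by (metis finite_UnionD finite_atLeastAtMost partition_on_def)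
    have "?T c c * ?T e e = ?T a0 a0 * ?T a1 a1"
    proof -
      have "?T c c * ?T e e = (\<Prod>Z\<in>ups. sig Z (restr Z c) (restr Z c) * sig Z (restr Z e) (restr Z e))"
        by (simp only: tensor_diag[OF cf(3)] tensor_diag[OF cf(4)] prod.distrib)
      also have "\<dots> = (\<Prod>Z\<in>ups. sig Z (restr Z a0) (restr Z a0) * sig Z (restr Z a1) (restr Z a1))"
      proof (rule prod.cong[OF refl])
        fix Z assume Z: "Z \<in> ups"
        show "sig Z (restr Z c) (restr Z c) * sig Z (restr Z e) (restr Z e) =
              sig Z (restr Z a0) (restr Z a0) * sig Z (restr Z a1) (restr Z a1)"
        proof (cases "Z = Y")
          case True
          have "restr Z c = restr Z a1" "restr Z e = restr Z a0"
            using True by (auto simp: restr_def c_def e_def a0_def a1_def fun_eq_iff)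
          then show ?thesis by (simp add: mult.commute)
        next
          case False then have "Z \<inter> Y = {}" using disjU Z Y by auto
          then have "restr Z c = restr Z a0" "restr Z e = restr Z a1"
            by (auto simp: restr_def c_def e_def a0_def a1_def fun_eq_iff)
          then show ?thesis by simp
        qed
      qed
      also have "\<dots> = ?T a0 a0 * ?T a1 a1"
        by (simp only: tensor_diag[OF cf(1)] tensor_diag[OF cf(2)] prod.distrib)
      finally show ?thesis .
    qed
    then show False using Tc T0 T1 by simp
  qed
qed

theorem mainTheorem17:
  fixes n :: nat and d :: "nat \<Rightarrow> nat" and Ups Xi :: "nat set set set"
  assumes "n \<ge> 1"
    and "\<forall>i\<in>{1..n}. d i > 1"
    and "Ups \<in> PII n" and "Xi \<in> PII n"
  shows "Ups \<subseteq> Xi \<longleftrightarrow> unc2 d n Ups \<subseteq> unc2 d n Xi"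
proof
  assume "Ups \<subseteq> Xi" then show "unc2 d n Ups \<subseteq> unc2 d n Xi"
    unfolding unc2_def by blast
next
  assume H: "unc2 d n Ups \<subseteq> unc2 d n Xi"
  show "Ups \<subseteq> Xi"
  proof
    fix xi assume xi: "xi \<in> Ups"
    have pxi: "partition_on {1..n} xi" using xi assms(3) by (auto simp: PII_def PI_def)
    have "tensor d {1..n} xi (RR d) \<in> unc d n xi"
      unfolding unc_def
    proof (intro CollectI exI conjI ballI refl)
      fix X assume X: "X \<in> xi"
      have XL: "X \<subseteq> {1..n}" "X \<noteq> {}" using pxi X by (auto simp: partition_on_def)
      show "RR d X \<in> density_ops d X"
        by (rule RR_density) (use XL assms(2) finite_subset in auto)
    qed (rule refl)
    then have "tensor d {1..n} xi (RR d) \<in> unc2 d n Xi" using H xi unfolding unc2_def by blast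
    then obtain ups rs where u: "ups \<in> Xi" "tensor d {1..n} xi (RR d) = tensor d {1..n} ups rs"
      unfolding unc2_def unc_def by blast
    have pu: "partition_on {1..n} ups" using u(1) assms(4) by (auto simp: PII_def PI_def)
    have "finer xi ups" by (rule key[OF pxi pu assms(2) u(2)])
    then show "xi \<in> Xi" using assms(4) u(1) pxi by (auto simp: PII_def PI_def)
  qed
qed

end
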